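(* Let $m,p\ge1$, matrices in $\mathbb{R}^{m\times p}$ being viewed as $m$-tuples of slices $P^{(1)},\dots,P^{(m)}\in\mathbb{R}^p$ with Frobenius inner product $\langle\cdot,\cdot\rangle$ and Frobenius norm $\|\cdot\|$. Let $f:\mathbb{R}^{m\times p}\to\mathbb{R}$ be differentiable, fix $\theta\in\mathbb{R}^{m\times p}$ with all slices $\theta^{(j)}\ne0$, and let $\xi$ be a random matrix in $\mathbb{R}^{m\times p}$ with $\mathbb{E}[\xi]=0$ (integrable). Set the stochastic gradient $\tilde g=\nabla f(\theta)+\xi$. Assume that almost surely every slice $\tilde g^{(j)}\ne0$ and the angle $\phi^{(j)}$ between $\tilde g^{(j)}$ and $\theta^{(j)}$ satisfies $\sin(\phi^{(j)})\ge\gamma$ for a constant $\gamma>0$, for all $j$. Define slice-wise $\hat\theta^{(j)}=\theta^{(j)}/\|\theta^{(j)}\|$, $v^{(j)}=\tilde g^{(j)}-\langle\tilde g^{(j)},\hat\theta^{(j)}\rangle\hat\theta^{(j)}$, $\hat v^{(j)}=v^{(j)}/\|v^{(j)}\|$. Then $$\mathbb{E}_{\xi}\big[\langle \tilde g,\hat v\rangle\big]\ \ge\ \gamma\,\|\nabla f(\theta)\|.$$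
   Context: Stochastic version of the simplified Mano step (no momentum, static Oblique manifold normalization over the $m$ slices), where the update direction $\hat v$ is built from the stochastic gradient $\tilde g$, an unbiased estimator of $\nabla f(\theta)$. *)

theory Defs
  imports "HOL-Analysis.Analysis" "HOL-Probability.Probability"
begin

text \<open>Matrices in R^{m x p} are modelled as real^'p^'m: the j-th slice of P is P $ j :: real^'p.
  The inner product / norm on real^'p^'m is the Frobenius one.\<close>

definition vec_angle :: "'a::real_inner \<Rightarrow> 'a \<Rightarrow> real" where
  "vec_angle u v = arccos (inner u v / (norm u * norm v))"

definition slice_normalize :: "real^'p^'m \<Rightarrow> real^'p^'m" where
  "slice_normalize \<theta> = (\<chi> j. (\<theta> $ j) /\<^sub>R norm (\<theta> $ j))"

definition tangent_proj :: "real^'p^'m \<Rightarrow> real^'p^'m \<Rightarrow> real^'p^'m" where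
  "tangent_proj \<theta> g = (\<chi> j. g $ j - inner (g $ j) (slice_normalize \<theta> $ j) *\<^sub>R (slice_normalize \<theta> $ j))"

definition mano_dir :: "real^'p^'m \<Rightarrow> real^'p^'m \<Rightarrow> real^'p^'m" where
  "mano_dir \<theta> g = (\<chi> j. (tangent_proj \<theta> g $ j) /\<^sub>R norm (tangent_proj \<theta> g $ j))"

end

theory Submission
  imports Defs
begin

lemma slice_ineq:
  fixes a b :: "'a::real_inner"
  assumes b: "b \<noteq> 0" and a: "a \<noteq> 0" and s: "sin (vec_angle a b) \<ge> \<gamma>"
  shows "norm (a - inner a (b /\<^sub>R norm b) *\<^sub>R (b /\<^sub>R norm b)) \<ge> \<gamma> * norm a"
proof -
  define u where "u = b /\<^sub>R norm b"
  have nu: "norm u = 1" using b by (simp add: u_def)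
  have iu: "inner u u = 1" using nu by (metis norm_eq_sqrt_inner real_sqrt_eq_1_iff)
  define c where "c = inner a b / (norm a * norm b)"
  have cu: "c = inner a u / norm a" using a b by (simp add: c_def u_def field_simps)
  have cs: "\<bar>inner a u\<bar> \<le> norm a" using Cauchy_Schwarz_ineq2[of a u] nu by simp
  have c1: "\<bar>c\<bar> \<le> 1" using cs a by (simp add: cu abs_divide divide_le_eq_1)
  have sa: "sin (vec_angle a b) = sqrt (1 - c^2)"
    unfolding vec_angle_def c_def[symmetric] using c1 by (intro sin_arccos) auto
  have "inner (a - inner a u *\<^sub>R u) (a - inner a u *\<^sub>R u) = inner a a - (inner a u)^2"
    by (simp add: inner_diff_left inner_diff_right iu power2_eq_square inner_commute)
  hence nv2: "(norm (a - inner a u *\<^sub>R u))^2 = (norm a)^2 - (inner a u)^2"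
    by (simp only: power2_norm_eq_inner)
  have "(norm a * sqrt (1 - c^2))^2 = (norm a)^2 - (inner a u)^2"
  proof -
    have c2: "c^2 \<le> 1" using c1 by (simp add: abs_square_le_1)
    have "(norm a * sqrt (1 - c^2))^2 = (norm a)^2 * (1 - c^2)" by (simp add: power_mult_distrib c2)
    also have "\<dots> = (norm a)^2 - (inner a u)^2" using a by (simp add: cu power_divide field_simps)
    finally show ?thesis .
  qed
  hence eq: "norm (a - inner a u *\<^sub>R u) = norm a * sqrt (1 - c^2)"
    using nv2 by - (rule power2_eq_imp_eq, simp_all add: abs_square_le_1 c1)
  have "\<gamma> * norm a \<le> sqrt (1 - c^2) * norm a" using s sa by (intro mult_right_mono) simp_all
  thus ?thesis unfolding u_def[symmetric] eq by (simp add: mult.commute)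
qed

lemma inner_mano:
  "inner g (mano_dir \<theta> g) = (\<Sum>j\<in>UNIV. norm (tangent_proj \<theta> g $ j))"
  if "\<forall>j. \<theta> $ j \<noteq> 0"
  for g \<theta> :: "real^'p^'m"
proof -
  have "inner (g $ j) (tangent_proj \<theta> g $ j /\<^sub>R norm (tangent_proj \<theta> g $ j))
        = norm (tangent_proj \<theta> g $ j)" for j
  proof -
    define u where "u = slice_normalize \<theta> $ j"
    have nu: "norm u = 1" using that by (simp add: u_def slice_normalize_def)
    have iu: "inner u u = 1" using nu by (metis norm_eq_sqrt_inner real_sqrt_eq_1_iff)
    have tp: "tangent_proj \<theta> g $ j = g $ j - inner (g $ j) u *\<^sub>R u"
      by (simp add: tangent_proj_def u_def)
    have "inner (g $ j) (tangent_proj \<theta> g $ j) = inner (tangent_proj \<theta> g $ j) (tangent_proj \<theta> g $ j)"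
      unfolding tp by (simp add: inner_diff_left inner_diff_right iu inner_commute)
    hence "inner (g $ j) (tangent_proj \<theta> g $ j) = (norm (tangent_proj \<theta> g $ j))^2"
      by (simp only: power2_norm_eq_inner)
    thus ?thesis by (cases "norm (tangent_proj \<theta> g $ j) = 0") (simp_all add: power2_eq_square)
  qed
  thus ?thesis by (simp add: inner_vec_def mano_dir_def)
qed

theorem mainTheorem2:
  fixes f :: "real^'p^'m \<Rightarrow> real"
    and \<theta> G :: "real^'p^'m"
    and M :: "'w measure"
    and \<xi> :: "'w \<Rightarrow> real^'p^'m"
    and \<gamma> :: real
  assumes diff: "\<And>x. f differentiable (at x)"
    and grad: "(f has_derivative (\<lambda>h. inner G h)) (at \<theta>)"
    and theta_nz: "\<forall>j. \<theta> $ j \<noteq> 0"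
    and M: "prob_space M"
    and meas: "\<xi> \<in> borel_measurable M"
    and integ: "integrable M \<xi>"
    and mean0: "integral\<^sup>L M \<xi> = 0"
    and gamma_pos: "\<gamma> > 0"
    and angle: "AE \<omega> in M. \<forall>j. (G + \<xi> \<omega>) $ j \<noteq> 0
                   \<and> sin (vec_angle ((G + \<xi> \<omega>) $ j) (\<theta> $ j)) \<ge> \<gamma>"
  shows "integral\<^sup>L M (\<lambda>\<omega>. inner (G + \<xi> \<omega>) (mano_dir \<theta> (G + \<xi> \<omega>))) \<ge> \<gamma> * norm G"
proof -
  interpret prob_space M by (rule M)
  define h where "h = (\<lambda>\<omega>. \<Sum>j\<in>UNIV. norm (tangent_proj \<theta> (G + \<xi> \<omega>) $ j))"
  have eqh: "(\<lambda>\<omega>. inner (G + \<xi> \<omega>) (mano_dir \<theta> (G + \<xi> \<omega>))) = h"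
    unfolding h_def using inner_mano[OF theta_nz] by auto
  have igx: "integrable M (\<lambda>\<omega>. G + \<xi> \<omega>)" using integ by simp
  have ign: "integrable M (\<lambda>\<omega>. norm (G + \<xi> \<omega>))" using igx by (rule integrable_norm)
  have cont: "continuous_on UNIV (\<lambda>x. \<Sum>j\<in>UNIV. norm (tangent_proj \<theta> (G + x) $ j))"
    unfolding tangent_proj_def by (intro continuous_intros) 
  have hm: "h \<in> borel_measurable M"
    unfolding h_def
    using measurable_compose[OF meas borel_measurable_continuous_onI[OF cont]] by simp
  have tpb: "norm (tangent_proj \<theta> g $ j) \<le> norm g" for g j
  proof -
    define u where "u = slice_normalize \<theta> $ j"
    have nu: "norm u = 1" using theta_nz by (simp add: u_def slice_normalize_def)
    have iu: "inner u u = 1" using nu by (metis norm_eq_sqrt_inner real_sqrt_eq_1_iff)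
    have tp: "tangent_proj \<theta> g $ j = g $ j - inner (g $ j) u *\<^sub>R u"
      by (simp add: tangent_proj_def u_def)
    have "inner (tangent_proj \<theta> g $ j) (tangent_proj \<theta> g $ j) = inner (g $ j) (g $ j) - (inner (g $ j) u)^2"
      unfolding tp by (simp add: inner_diff_left inner_diff_right iu power2_eq_square inner_commute)
    hence "(norm (tangent_proj \<theta> g $ j))^2 = (norm (g $ j))^2 - (inner (g $ j) u)^2"
      by (simp only: power2_norm_eq_inner)
    hence "(norm (tangent_proj \<theta> g $ j))^2 \<le> (norm (g $ j))^2" by simp
    hence "norm (tangent_proj \<theta> g $ j) \<le> norm (g $ j)" by (simp add: power2_le_iff_abs_le)
    thus ?thesis using Finite_Cartesian_Product.norm_nth_le[of g j] by linarith
  qed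
  have hint: "integrable M h"
  proof (rule Bochner_Integration.integrable_bound[OF integrable_mult_right[OF ign, of "real CARD('m)"] hm])
    show "AE x in M. norm (h x) \<le> norm (real CARD('m) * norm (G + \<xi> x))"
    proof (rule AE_I2)
      fix x
      have "h x \<le> (\<Sum>j\<in>(UNIV::'m set). norm (G + \<xi> x))"
        unfolding h_def by (rule sum_mono) (rule tpb)
      moreover have "h x \<ge> 0" unfolding h_def by (simp add: sum_nonneg)
      ultimately show "norm (h x) \<le> norm (real CARD('m) * norm (G + \<xi> x))" by simp
    qed
  qed
  have lower: "AE \<omega> in M. \<gamma> * norm (G + \<xi> \<omega>) \<le> h \<omega>"
    using angle
  proof (rule AE_mp, intro AE_I2 impI)
    fix \<omega> assume A: "\<forall>j. (G + \<xi> \<omega>) $ j \<noteq> 0 \<and> sin (vec_angle ((G + \<xi> \<omega>) $ j) (\<theta> $ j)) \<ge> \<gamma>"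
    let ?g = "G + \<xi> \<omega>"
    have "norm ?g \<le> (\<Sum>j\<in>UNIV. norm (?g $ j))" by (simp add: norm_vec_def L2_set_le_sum)
    hence "\<gamma> * norm ?g \<le> \<gamma> * (\<Sum>j\<in>UNIV. norm (?g $ j))"
      using gamma_pos by simp
    also have "\<dots> = (\<Sum>j\<in>UNIV. \<gamma> * norm (?g $ j))" by (simp add: sum_distrib_left)
    also have "\<dots> \<le> h \<omega>" unfolding h_def
    proof (rule sum_mono)
      fix j
      have "\<gamma> * norm (?g $ j) \<le> norm (?g $ j - inner (?g $ j) (\<theta> $ j /\<^sub>R norm (\<theta> $ j)) *\<^sub>R (\<theta> $ j /\<^sub>R norm (\<theta> $ j)))"
        using slice_ineq[of "\<theta> $ j" "?g $ j" \<gamma>] A theta_nz by blast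
      thus "\<gamma> * norm (?g $ j) \<le> norm (tangent_proj \<theta> ?g $ j)"
        by (simp add: tangent_proj_def slice_normalize_def)
    qed
    finally show "\<gamma> * norm ?g \<le> h \<omega>" .
  qed
  have "integral\<^sup>L M (\<lambda>\<omega>. G + \<xi> \<omega>) = G"
    using integ mean0 by (simp add: Bochner_Integration.integral_add prob_space)
  hence "norm G \<le> integral\<^sup>L M (\<lambda>\<omega>. norm (G + \<xi> \<omega>))"
    by (metis integral_norm_bound)
  hence "\<gamma> * norm G \<le> \<gamma> * integral\<^sup>L M (\<lambda>\<omega>. norm (G + \<xi> \<omega>))"
    using gamma_pos by simp
  also have "\<dots> = integral\<^sup>L M (\<lambda>\<omega>. \<gamma> * norm (G + \<xi> \<omega>))" by simp
  also have "\<dots> \<le> integral\<^sup>L M h"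
    by (rule integral_mono_AE[OF integrable_mult_right[OF ign] hint lower])
  finally show ?thesis using eqh by simp
qed

end
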